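(* Let $\alpha>0$, $\beta_m>\alpha$, $\tau=1/(\beta_m-\alpha)$ and $$\beta(t)=\alpha+\frac{1/\tau}{1+t/\tau}.$$ Let $S_0>0$, $I_0>0$ and let $(S(t),I(t),R(t))$ be the solution of $$\dot S=-\frac{\beta(t)SI}{S+I},\qquad \dot I=\frac{\beta(t)SI}{S+I}-\alpha I,\qquad \dot R=\alpha I$$ with $S(0)=S_0$, $I(0)=I_0$. Then for $t\ge 0$, $$S(t)=S_0\left(\frac{S_0+I_0}{S_0+I_0(1+t/\tau)}\right)^{1-\frac{S_0}{I_0}\alpha\tau}e^{-\alpha t},\qquad I(t)=I_0\left(1+\frac t\tau\right)\left(\frac{S_0+I_0}{S_0+I_0(1+t/\tau)}\right)^{1-\frac{S_0}{I_0}\alpha\tau}e^{-\alpha t},$$ and the maximum of $I(t)$ occurs at $$t_{\mathrm{peak}}=\tau\left(\sqrt{\frac{S_0}{I_0\alpha\tau}}-1\right).$$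
   Context: Modified SIR epidemiological model with constant recovery rate $\alpha$ and time-dependent transmission rate $\beta(t)$, here monotonically decreasing from $\beta_m$ at $t=0$ towards $\alpha$. *)

theory Defs
  imports Complex_Main
begin

definition sir_tau :: "real \<Rightarrow> real \<Rightarrow> real" where
  "sir_tau \<alpha> \<beta>m = 1 / (\<beta>m - \<alpha>)"

definition sir_beta :: "real \<Rightarrow> real \<Rightarrow> real \<Rightarrow> real" where
  "sir_beta \<alpha> \<beta>m t = \<alpha> + (1 / sir_tau \<alpha> \<beta>m) / (1 + t / sir_tau \<alpha> \<beta>m)"

end

theory Submission
  imports Defs "HOL-Analysis.Analysis"
begin

lemma alg1:
  fixes s i v a :: real
  assumes "s > 0" "i > 0" "v \<noteq> 0"
  shows "1/i * ((a + 1/v) * s * i / (s + i) - a * i) - 1/s * (- ((a + 1/v) * s * i / (s + i))) - 1/v = 0"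
proof -
  define A where "A = a + 1/v"
  have d: "s + i \<noteq> 0" using assms by auto
  have e1: "A * s * i / (s + i) - a * i = (A * s / (s + i) - a) * i" by (simp add: algebra_simps)
  have 1: "1/i * (A * s * i / (s + i) - a * i) = A * s / (s + i) - a"
    unfolding e1 using assms by simp
  have e2: "A * s * i / (s + i) = (A * i / (s + i)) * s" by (simp add: algebra_simps)
  have 2: "1/s * (- (A * s * i / (s + i))) = - (A * i / (s + i))"
    unfolding e2 using assms by simp
  have 3: "A * s / (s + i) + A * i / (s + i) = A"
    using d by (simp add: add_divide_distrib[symmetric] distrib_left[symmetric])
  show ?thesis unfolding A_def[symmetric] 1 2 using 3 unfolding A_def by linarith
qed

lemma alg2:
  fixes s i v a S0 I0 \<tau> k :: real
  assumes "s > 0" "v > 0" "S0 > 0" "I0 > 0" "\<tau> > 0"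
    and i: "i = I0 * v / (S0 * \<tau>) * s" and k: "k = S0 / I0 * a * \<tau>"
  shows "1/s * (- ((a + 1/v) * s * i / (s + i))) + a - (k - 1) * (1 / (S0*\<tau> + I0 * v) * I0) = 0"
proof -
  define D where "D = S0*\<tau> + I0 * v"
  have D: "D > 0" using assms by (simp add: D_def add_pos_pos)
  have q: "i / (s + i) = I0 * v / D"
  proof -
    have ip: "i > 0" using assms by simp
    have e: "S0 * \<tau> * i = I0 * v * s" using assms by simp
    have "D * i = I0 * v * (s + i)" using e by (simp add: D_def algebra_simps)
    moreover have "s + i \<noteq> 0" "D \<noteq> 0" using ip assms(1) D by auto
    ultimately show ?thesis by (simp add: frac_eq_eq mult.commute)
  qed
  have 1: "1/s * (- ((a + 1/v) * s * i / (s + i))) = - ((a + 1/v) * (i / (s + i)))"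
    using assms by simp
  have 2: "- ((a + 1/v) * (I0 * v / D)) + a - (k - 1) * (1 / D * I0) = 0"
  proof -
    define A where "A = a + 1/v"
    define X where "X = - (A * (I0 * v / D)) + a - (k - 1) * (1 / D * I0)"
    have m: "X * D = - (A * v) * I0 + a * D - (k - 1) * I0"
      using D unfolding X_def by (simp add: field_simps)
    have v1: "A * v = a * v + 1" using assms(2) unfolding A_def by (simp add: algebra_simps)
    have k1: "(k - 1) * I0 = a * S0 * \<tau> - I0" using assms(4) unfolding k by (simp add: algebra_simps)
    have "- (A * v) * I0 + a * D - (k - 1) * I0 = 0" unfolding v1 k1 D_def by (simp add: algebra_simps)
    then have "X * D = 0" using m by simp
    then have "X = 0" using D by simp
    then show ?thesis unfolding X_def A_def .
  qed
  show ?thesis unfolding 1 q D_def[symmetric] using 2 .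
qed

lemma alg3:
  fixes s i v a S0 I0 \<tau> :: real
  assumes "s > 0" "v > 0" "S0 > 0" "I0 > 0" "\<tau> > 0"
    and i: "i = I0 * v / (S0 * \<tau>) * s"
  shows "(a + 1/v) * s * i / (s + i) - a * i
     = i * ((S0 * \<tau> - a * I0 * v^2) / (v * (S0 * \<tau> + I0 * v)))"
proof -
  define D where "D = S0*\<tau> + I0 * v"
  have D: "D > 0" using assms by (simp add: D_def add_pos_pos)
  have ip: "i > 0" using assms by simp
  have q: "s / (s + i) = S0 * \<tau> / D"
  proof -
    have e: "S0 * \<tau> * i = I0 * v * s" using assms by simp
    have "D * s = S0 * \<tau> * (s + i)" using e by (simp add: D_def algebra_simps)
    moreover have "s + i \<noteq> 0" "D \<noteq> 0" using ip assms(1) D by auto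
    ultimately show ?thesis by (simp add: frac_eq_eq mult.commute)
  qed
  define A where "A = a + 1/v"
  have 1: "A * s * i / (s + i) - a * i = i * (A * (s / (s + i)) - a)"
    by (simp add: algebra_simps)
  have 2: "A * (S0 * \<tau> / D) - a = (S0 * \<tau> - a * I0 * v^2) / (v * D)"
  proof -
    have "A * (S0 * \<tau> / D) = (a * v + 1) * S0 * \<tau> / (v * D)"
      using assms(2) D unfolding A_def by (simp add: field_simps)
    moreover have "a = a * v * D / (v * D)" using assms(2) D by simp
    ultimately have "A * (S0 * \<tau> / D) - a = ((a * v + 1) * S0 * \<tau> - a * v * D) / (v * D)"
      by (metis diff_divide_distrib)
    also have "(a * v + 1) * S0 * \<tau> - a * v * D = S0 * \<tau> - a * I0 * v^2"
      unfolding D_def by (simp add: algebra_simps power2_eq_square)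
    finally show ?thesis .
  qed
  show ?thesis unfolding A_def[symmetric] D_def[symmetric] 1 q 2 ..
qed

theorem mainTheorem5:
  fixes \<alpha> \<beta>m S0 I0 :: real and S I R :: "real \<Rightarrow> real"
  assumes "\<alpha> > 0" and "\<beta>m > \<alpha>" and "S0 > 0" and "I0 > 0"
    and "S 0 = S0" and "I 0 = I0"
    and "\<forall>t\<ge>0. (S has_real_derivative
           (- (sir_beta \<alpha> \<beta>m t * S t * I t / (S t + I t)))) (at t within {0..})"
    and "\<forall>t\<ge>0. (I has_real_derivative
           (sir_beta \<alpha> \<beta>m t * S t * I t / (S t + I t) - \<alpha> * I t)) (at t within {0..})"
    and "\<forall>t\<ge>0. (R has_real_derivative (\<alpha> * I t)) (at t within {0..})"
  shows "(\<forall>t\<ge>0.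
            S t = S0 * ((S0 + I0) / (S0 + I0 * (1 + t / sir_tau \<alpha> \<beta>m)))
                    powr (1 - S0 / I0 * \<alpha> * sir_tau \<alpha> \<beta>m) * exp (- \<alpha> * t)
          \<and> I t = I0 * (1 + t / sir_tau \<alpha> \<beta>m)
                  * ((S0 + I0) / (S0 + I0 * (1 + t / sir_tau \<alpha> \<beta>m)))
                    powr (1 - S0 / I0 * \<alpha> * sir_tau \<alpha> \<beta>m) * exp (- \<alpha> * t))
       \<and> (let tp = sir_tau \<alpha> \<beta>m * (sqrt (S0 / (I0 * \<alpha> * sir_tau \<alpha> \<beta>m)) - 1)
          in tp \<ge> 0 \<longrightarrow> (\<forall>t\<ge>0. I t \<le> I tp))"
proof -
  define \<tau> where "\<tau> = sir_tau \<alpha> \<beta>m"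
  have tau: "\<tau> > 0" using assms by (simp add: \<tau>_def sir_tau_def)
  have beta: "sir_beta \<alpha> \<beta>m t = \<alpha> + 1/(\<tau>+t)" if "t \<ge> 0" for t
    using tau that by (simp add: sir_beta_def \<tau>_def[symmetric] field_simps)
  have dS: "(S has_real_derivative (- ((\<alpha> + 1/(\<tau>+t)) * S t * I t / (S t + I t)))) (at t)"
    if "t > 0" for t
  proof -
    have "(S has_real_derivative (- ((\<alpha> + 1/(\<tau>+t)) * S t * I t / (S t + I t)))) (at t within {0<..})"
    proof -
      have h: "(S has_real_derivative (- (sir_beta \<alpha> \<beta>m t * S t * I t / (S t + I t)))) (at t within {0..})" using assms(7) that by auto
      have h2: "(\<alpha> + 1/(\<tau>+t)) = sir_beta \<alpha> \<beta>m t" using beta[of t] that by simp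
      show ?thesis unfolding h2 using h by (rule DERIV_subset) auto
    qed
    moreover have "at t within {0<..} = at t" by (rule at_within_open) (use that in auto)
    ultimately show ?thesis by simp
  qed
  have dI: "(I has_real_derivative ((\<alpha> + 1/(\<tau>+t)) * S t * I t / (S t + I t) - \<alpha> * I t)) (at t)"
    if "t > 0" for t
  proof -
    have "(I has_real_derivative ((\<alpha> + 1/(\<tau>+t)) * S t * I t / (S t + I t) - \<alpha> * I t)) (at t within {0<..})"
    proof -
      have h: "(I has_real_derivative (sir_beta \<alpha> \<beta>m t * S t * I t / (S t + I t) - \<alpha> * I t)) (at t within {0..})" using assms(8) that by auto
      have h2: "(\<alpha> + 1/(\<tau>+t)) = sir_beta \<alpha> \<beta>m t" using beta[of t] that by simp
      show ?thesis unfolding h2 using h by (rule DERIV_subset) auto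
    qed
    moreover have "at t within {0<..} = at t" by (rule at_within_open) (use that in auto)
    ultimately show ?thesis by simp
  qed
  have contS: "continuous_on {0..} S" using assms(7) by (intro DERIV_continuous_on) auto
  have contI: "continuous_on {0..} I" using assms(8) by (intro DERIV_continuous_on) auto
  define k where "k = S0 / I0 * \<alpha> * \<tau>"
  define Sc where "Sc t = S0 * ((S0 + I0) / (S0 + I0 * (1 + t / \<tau>))) powr (1 - k) * exp (- \<alpha> * t)" for t
  define Ic where "Ic t = I0 * (1 + t / \<tau>) * ((S0 + I0) / (S0 + I0 * (1 + t / \<tau>))) powr (1 - k) * exp (- \<alpha> * t)" for t
  have den: "S0 + I0 * (1 + t / \<tau>) > 0" if "t \<ge> 0" for t
  proof -
    have "1 + t / \<tau> > 0" using tau that by (simp add: add_pos_nonneg)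
    then show ?thesis using assms by (simp add: add_pos_pos)
  qed
  have base: "(S0 + I0) / (S0 + I0 * (1 + t / \<tau>)) > 0" if "t \<ge> 0" for t
    using den[OF that] assms by simp
  have Sc_pos: "Sc t > 0" if "t \<ge> 0" for t
    unfolding Sc_def using assms base[OF that] by (intro mult_pos_pos) auto
  have Ic_pos: "Ic t > 0" if "t \<ge> 0" for t
  proof -
    have "1 + t / \<tau> > 0" using tau that by (simp add: add_pos_nonneg)
    then show ?thesis unfolding Ic_def using assms base[OF that] by (intro mult_pos_pos) auto
  qed
  have contSc: "continuous_on {0..} Sc"
    unfolding Sc_def using base den tau assms(3,4)
    by (intro continuous_intros) (auto dest!: den)
  have contIc: "continuous_on {0..} Ic"
    unfolding Ic_def using base den tau assms(3,4)
    by (intro continuous_intros) (auto dest!: den)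
  have A1: "I b = I0 * (\<tau>+b) / (S0*\<tau>) * S b"
    if b: "b \<ge> 0" "\<forall>s\<in>{0..b}. S s > 0 \<and> I s > 0" for b
  proof (cases "b = 0")
    case True then show ?thesis using assms tau by simp
  next
    case False
    define g where "g t = ln (I t) - ln (S t) - ln (\<tau>+t)" for t
    have cS: "continuous_on {0..b} S" by (rule continuous_on_subset[OF contS]) auto
    have cI: "continuous_on {0..b} I" by (rule continuous_on_subset[OF contI]) auto
    have "g b = g 0"
    proof (rule DERIV_isconst_end[where a=0 and b=b and f=g])
      show "0 < b" using b False by simp
      show "continuous_on {0..b} g" unfolding g_def
        using cS cI b tau by (intro continuous_intros) auto
      fix x assume x: "0 < x" "x < b"
      have p: "S x > 0" "I x > 0" using b x by auto
      have d: "DERIV g x :> 1/I x * ((\<alpha> + 1/(\<tau>+x)) * S x * I x / (S x + I x) - \<alpha> * I x)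
          - 1/S x * (- ((\<alpha> + 1/(\<tau>+x)) * S x * I x / (S x + I x))) - 1/(\<tau>+x)"
        unfolding g_def using p tau x
        apply (intro derivative_eq_intros)
        apply (assumption | rule dI[OF x(1)] dS[OF x(1)] refl | simp)+
        done
      have e: "1/I x * ((\<alpha> + 1/(\<tau>+x)) * S x * I x / (S x + I x) - \<alpha> * I x)
          - 1/S x * (- ((\<alpha> + 1/(\<tau>+x)) * S x * I x / (S x + I x))) - 1/(\<tau>+x) = 0"
      proof -
        have q: "S x + I x \<noteq> 0" "\<tau> + x \<noteq> 0" using p tau x by auto
        show ?thesis using alg1[of "S x" "I x" "\<tau> + x" \<alpha>] p q by simp
      qed
      show "DERIV g x :> 0" using d unfolding e .
    qed
    then have "ln (I b) - ln (S b) - ln (\<tau>+b) = ln I0 - ln S0 - ln \<tau>"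
      by (simp add: g_def assms)
    moreover have pb: "S b > 0" "I b > 0" using b by auto
    have "ln (I0 * (\<tau>+b) / (S0*\<tau>) * S b) = ln I0 + ln (\<tau>+b) - (ln S0 + ln \<tau>) + ln (S b)"
      using assms(3,4) tau b(1) pb by (simp add: ln_mult ln_div)
    ultimately have "ln (I b) = ln (I0 * (\<tau>+b) / (S0*\<tau>) * S b)"
      by linarith
    then show ?thesis using assms(3,4) tau b(1) pb by (subst (asm) ln_inj_iff) auto
  qed
  have dpos: "S0*\<tau> + I0*(\<tau>+t) > 0" if "t \<ge> 0" for t
    using assms(3,4) tau that by (simp add: add_pos_pos)
  have A2: "S b = Sc b \<and> I b = Ic b"
    if b: "b \<ge> 0" "\<forall>s\<in>{0..b}. S s > 0 \<and> I s > 0" for b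
  proof -
    have rel: "I x = I0 * (\<tau>+x) / (S0*\<tau>) * S x" if "0 \<le> x" "x \<le> b" for x
      using A1[of x] that b by auto
    define h where "h t = ln (S t) + \<alpha> * t - (k - 1) * ln (S0*\<tau> + I0*(\<tau>+t))" for t
    have pb: "S b > 0" "I b > 0" using b by auto
    have hb: "h b = h 0"
    proof (cases "b = 0")
      case True then show ?thesis by simp
    next
      case False
      have cS: "continuous_on {0..b} S" by (rule continuous_on_subset[OF contS]) auto
      have nz: "S x \<noteq> 0" "S0*\<tau> + I0*(\<tau>+x) \<noteq> 0" if "x \<in> {0..b}" for x
      proof -
        have "S x > 0" using b(2) that by blast
        moreover have "S0*\<tau> + I0*(\<tau>+x) > 0" using dpos[of x] that by auto
        ultimately show "S x \<noteq> 0" "S0*\<tau> + I0*(\<tau>+x) \<noteq> 0" by auto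
      qed
      show ?thesis
      proof (rule DERIV_isconst_end[where a=0 and b=b and f=h])
        show "0 < b" using b False by simp
        show "continuous_on {0..b} h" unfolding h_def
          using cS nz by (intro continuous_intros) auto
        fix x assume x: "0 < x" "x < b"
        have p: "S x > 0" using b x by auto
        have d: "DERIV h x :> 1/S x * (- ((\<alpha> + 1/(\<tau>+x)) * S x * I x / (S x + I x))) + \<alpha>
            - (k - 1) * (1 / (S0*\<tau> + I0*(\<tau>+x)) * I0)"
          unfolding h_def using p dpos[of x] x
          apply (intro derivative_eq_intros)
          apply (assumption | rule dS[OF x(1)] refl | simp)+
          done
        have e: "1/S x * (- ((\<alpha> + 1/(\<tau>+x)) * S x * I x / (S x + I x))) + \<alpha>
            - (k - 1) * (1 / (S0*\<tau> + I0*(\<tau>+x)) * I0) = 0"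
          by (rule alg2[OF p _ assms(3,4) tau rel[of x] k_def]) (use x tau in auto)
        show "DERIV h x :> 0" using d unfolding e .
      qed
    qed
    define D0 where "D0 = S0*\<tau> + I0*\<tau>"
    define Db where "Db = S0*\<tau> + I0*(\<tau>+b)"
    have D0: "D0 > 0" unfolding D0_def using dpos[of 0] by simp
    have Db: "Db > 0" unfolding Db_def using dpos[of b] b by simp
    have lnS: "ln (S b) = ln S0 + (1-k)*(ln D0 - ln Db) + (-\<alpha>*b)"
      using hb unfolding h_def D0_def Db_def by (simp add: assms(5) algebra_simps)
    have ratio: "(S0 + I0) / (S0 + I0 * (1 + b / \<tau>)) = D0 / Db"
      unfolding D0_def Db_def using tau den[OF b(1)] dpos[OF b(1)] by (simp add: field_simps)
    have "Sc b = S0 * exp ((1-k) * (ln D0 - ln Db)) * exp (-\<alpha>*b)"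
      unfolding Sc_def ratio powr_def using D0 Db by (simp add: ln_div)
    also have "\<dots> = exp (ln (S b))" unfolding lnS exp_add using assms(3) by simp
    also have "\<dots> = S b" using pb by simp
    finally have SS: "S b = Sc b" ..
    have fe: "I0*(\<tau>+b)/(S0*\<tau>)*(S0*P*E) = I0*(1+b/\<tau>)*P*E" for P E
      using tau assms(3) by (simp add: field_simps)
    have "I b = Ic b" unfolding rel[OF b(1) order_refl] SS unfolding Sc_def Ic_def fe ..
    with SS show ?thesis by simp
  qed
  have pos: "S t > 0 \<and> I t > 0" if "t \<ge> 0" for t
  proof (rule ccontr)
    assume nt: "\<not> (S t > 0 \<and> I t > 0)"
    define Z where "Z = {t. t \<ge> 0 \<and> \<not> (S t > 0 \<and> I t > 0)}"
    have Zne: "Z \<noteq> {}" using nt that unfolding Z_def by auto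
    have bdd: "bdd_below Z" unfolding Z_def by (rule bdd_belowI[of _ 0]) auto
    define t1 where "t1 = Inf Z"
    have t1ge: "t1 \<ge> 0" unfolding t1_def using Zne by (intro cInf_greatest) (auto simp: Z_def)
    have before: "S s > 0 \<and> I s > 0" if "0 \<le> s" "s < t1" for s
    proof (rule ccontr)
      assume "\<not> (S s > 0 \<and> I s > 0)"
      then have "s \<in> Z" using that by (auto simp: Z_def)
      then have "t1 \<le> s" unfolding t1_def using bdd by (rule cInf_lower)
      with that show False by simp
    qed
    have eqb: "S s = Sc s \<and> I s = Ic s" if "0 \<le> s" "s < t1" for s
      using A2[of s] before that by auto
    have at1: "S t1 > 0 \<and> I t1 > 0"
    proof (cases "t1 = 0")
      case True then show ?thesis using assms by simp
    next
      case False
      then have t1p: "t1 > 0" using t1ge by simp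
      have cl: "closure {0..<t1} = {0..t1}" using t1p by simp
      have cS1: "continuous_on {0..t1} S" by (rule continuous_on_subset[OF contS]) auto
      have cI1: "continuous_on {0..t1} I" by (rule continuous_on_subset[OF contI]) auto
      have cSc1: "continuous_on {0..t1} Sc" by (rule continuous_on_subset[OF contSc]) auto
      have cIc1: "continuous_on {0..t1} Ic" by (rule continuous_on_subset[OF contIc]) auto
      have c1: "continuous_on (closure {0..<t1}) (\<lambda>s. S s - Sc s)" unfolding cl
        using cS1 cSc1 by (rule continuous_on_diff)
      have c2: "continuous_on (closure {0..<t1}) (\<lambda>s. I s - Ic s)" unfolding cl
        using cI1 cIc1 by (rule continuous_on_diff)
      have t1c: "t1 \<in> closure {0..<t1}" unfolding cl using t1p by simp
      have "S t1 - Sc t1 = 0"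
        by (rule continuous_constant_on_closure[OF c1 _ t1c]) (use eqb in auto)
      moreover have "I t1 - Ic t1 = 0"
        by (rule continuous_constant_on_closure[OF c2 _ t1c]) (use eqb in auto)
      ultimately show ?thesis using Sc_pos[of t1] Ic_pos[of t1] t1ge by simp
    qed
    obtain d1 where d1: "d1 > 0" "\<forall>y\<in>{0..}. dist y t1 < d1 \<longrightarrow> dist (S y) (S t1) < S t1"
      using contS t1ge at1 unfolding continuous_on_iff by (meson atLeast_iff)
    obtain d2 where d2: "d2 > 0" "\<forall>y\<in>{0..}. dist y t1 < d2 \<longrightarrow> dist (I y) (I t1) < I t1"
      using contI t1ge at1 unfolding continuous_on_iff by (meson atLeast_iff)
    have "Inf Z < t1 + min d1 d2" unfolding t1_def[symmetric] using d1 d2 by simp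
    then obtain z where z: "z \<in> Z" "z < t1 + min d1 d2" using cInf_lessD[OF Zne] by blast
    have "t1 \<le> z" unfolding t1_def using z(1) bdd by (rule cInf_lower)
    then have "dist z t1 < d1" "dist z t1 < d2" using z(2) by (auto simp: dist_real_def)
    moreover have "z \<ge> 0" using z(1) by (auto simp: Z_def)
    ultimately have "dist (S z) (S t1) < S t1" "dist (I z) (I t1) < I t1" using d1 d2 by auto
    then have "S z > 0" "I z > 0" by (auto simp: dist_real_def)
    then show False using z(1) by (auto simp: Z_def)
  qed
  have part1: "\<forall>t\<ge>0. S t = Sc t \<and> I t = Ic t"
  proof (intro allI impI)
    fix t :: real assume t: "t \<ge> 0"
    show "S t = Sc t \<and> I t = Ic t" using A2[OF t] pos by auto
  qed
  have part2: "I t \<le> I tp" if tp: "tp = \<tau> * (sqrt (S0 / (I0 * \<alpha> * \<tau>)) - 1)" "tp \<ge> 0" "t \<ge> 0" for t tp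
  proof -
    define q where "q = S0 / (I0 * \<alpha> * \<tau>)"
    have qp: "q > 0" using assms tau by (simp add: q_def)
    have vs: "\<tau> + tp = \<tau> * sqrt q" using tp(1) unfolding q_def by (simp add: algebra_simps)
    have vs2: "\<alpha> * I0 * (\<tau> + tp)^2 = \<tau> * S0"
    proof -
      have "(\<tau> + tp)^2 = \<tau>^2 * q" unfolding vs using qp by (simp add: power_mult_distrib)
      then show ?thesis unfolding q_def using assms tau by (simp add: field_simps power2_eq_square)
    qed
    define F where "F x = (S0 * \<tau> - \<alpha> * I0 * (\<tau>+x)^2) / ((\<tau>+x) * (S0 * \<tau> + I0 * (\<tau>+x)))" for x
    have dI': "DERIV I x :> I x * F x" if "x > 0" for x
    proof -
      have r: "I x = I0 * (\<tau>+x) / (S0*\<tau>) * S x" using A1[of x] pos that by auto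
      have "(\<alpha> + 1/(\<tau>+x)) * S x * I x / (S x + I x) - \<alpha> * I x = I x * F x"
        unfolding F_def by (rule alg3[OF _ _ assms(3,4) tau r]) (use pos[of x] that tau in auto)
      then show ?thesis using dI[OF that] by simp
    qed
    have Fsign: "(0 \<le> F x) = (\<alpha> * I0 * (\<tau>+x)^2 \<le> S0 * \<tau>)" if "x \<ge> 0" for x
    proof -
      have "(\<tau>+x) * (S0 * \<tau> + I0 * (\<tau>+x)) > 0" using dpos[OF that] tau that by simp
      then show ?thesis unfolding F_def by (simp add: zero_le_divide_iff)
    qed
    show ?thesis
    proof (cases "t \<le> tp")
      case True
      show ?thesis
      proof (rule DERIV_nonneg_imp_increasing_open[of t tp I])
        show "t \<le> tp" by fact
        show "continuous_on {t..tp} I" by (rule continuous_on_subset[OF contI]) (use tp in auto)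
        fix x assume x: "t < x" "x < tp"
        have "(\<tau>+x)^2 \<le> (\<tau>+tp)^2" using x tp tau by (intro power_mono) auto
        then have "\<alpha> * I0 * (\<tau>+x)^2 \<le> \<alpha> * I0 * (\<tau>+tp)^2" using assms by simp
        then have "0 \<le> F x" using Fsign[of x] vs2 x tp by (simp add: mult.commute)
        moreover have "I x > 0" using pos[of x] x tp by simp
        ultimately show "\<exists>y. DERIV I x :> y \<and> 0 \<le> y" using dI'[of x] x tp by auto
      qed
    next
      case False
      show ?thesis
      proof (rule DERIV_nonpos_imp_decreasing_open[of tp t I])
        show "tp \<le> t" using False by simp
        show "continuous_on {tp..t} I" by (rule continuous_on_subset[OF contI]) (use tp in auto)
        fix x assume x: "tp < x" "x < t"
        have "(\<tau>+tp)^2 \<le> (\<tau>+x)^2" using x tp tau by (intro power_mono) auto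
        then have "\<alpha> * I0 * (\<tau>+tp)^2 \<le> \<alpha> * I0 * (\<tau>+x)^2" using assms by simp
        then have "F x \<le> 0"
        proof -
          assume h: "\<alpha> * I0 * (\<tau>+tp)^2 \<le> \<alpha> * I0 * (\<tau>+x)^2"
          have "(\<tau>+x) * (S0 * \<tau> + I0 * (\<tau>+x)) > 0" using dpos[of x] tau x tp by simp
          moreover have "S0 * \<tau> - \<alpha> * I0 * (\<tau>+x)^2 \<le> 0" using h vs2 by (simp add: mult.commute)
          ultimately show ?thesis unfolding F_def by (simp add: divide_nonpos_pos)
        qed
        moreover have "I x > 0" using pos[of x] x tp by simp
        ultimately have "I x * F x \<le> 0" by (intro mult_nonneg_nonpos) auto
        then show "\<exists>y. DERIV I x :> y \<and> y \<le> 0" using dI'[of x] x tp by auto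
      qed
    qed
  qed
  show ?thesis
    using part1 part2 unfolding Sc_def Ic_def k_def \<tau>_def Let_def by auto
qed

end
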